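(* Let $\lambda_1\geq\lambda_{\max}(\mathbf{W})$ and $0<\lambda_2\leq\lambda_{\min}^+(\mathbf{W})$. Set $\eta=\frac{1}{4\tau L}$, $\theta=\frac{1}{\eta\lambda_1}$, $\alpha=\mu$, $\tau=\min\left\{1,\frac12\sqrt{\frac{\mu}{L}\frac{\lambda_1}{\lambda_2}}\right\}$. Define \[ \Psi^k = \left\|\begin{bmatrix}x^k-x^\star\\ y^k-y^\star\end{bmatrix}\right\|_{\mathbf{Q}}^2 + \frac{2(1-\tau)}{\tau}\mathrm{D}_F(x_f^k,x^\star). \] Then for every $k\geq0$, \[ \Psi^{k+1}\leq\left(1+\frac14\min\left\{\sqrt{\frac{\mu}{L}\frac{\lambda_2}{\lambda_1}},\frac{\lambda_2}{\lambda_1}\right\}\right)^{-1}\Psi^k . \]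
   Context: Let $\mathsf{X}=\mathbb{R}^d$, $\mathsf{Y}=\mathbb{R}^p$, $F:\mathsf{X}\to\mathbb{R}$ be $L$-smooth and $\mu$-strongly convex ($0<\mu\le L$), $\mathbf{K}$ a nonzero $p\times d$ matrix, $b\in\mathrm{range}(\mathbf{K})$, $\mathbf{W}=\mathbf{K}^T\mathbf{K}$ with largest eigenvalue $\lambda_{\max}(\mathbf{W})$ and smallest positive eigenvalue $\lambda_{\min}^+(\mathbf{W})$. $\mathrm{D}_F(x,x')=F(x)-F(x')-\langle\nabla F(x'),x-x'\rangle$. $x^\star=\arg\min_{\mathbf{K}x=b}F(x)$ and $y^\star$ is the unique vector in $\mathrm{range}(\mathbf{K})$ with $\nabla F(x^\star)+\mathbf{K}^Ty^\star=0$. The iterates come from the algorithm with $x^0\in\mathsf{X}$, $y^0=0$, $x_f^0=x^0$, iterating for $k=0,1,\ldots$: $x_g^k = \tau x^k + (1-\tau)x_f^k$; $x^{k+\frac12} = (1+\eta\alpha)^{-1}\big(x^k - \eta(\nabla F(x_g^k) - \alpha x_g^k + \mathbf{K}^T y^k)\big)$; $y^{k+1} = y^k + \theta(\mathbf{K} x^{k+\frac12} - b)$; $x^{k+1} = (1+\eta\alpha)^{-1}\big(x^k - \eta(\nabla F(x_g^k) - \alpha x_g^k + \mathbf{K}^T y^{k+1})\big)$; $x_f^{k+1} = x_g^k + \frac{2\tau}{2-\tau}(x^{k+1}-x^k)$. $\mathbf{Q} = \begin{bmatrix}\frac{1}{\eta}\mathbf{I}_\mathsf{X} & 0\\ 0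 & \frac{1}{\theta}\mathbf{I}_\mathsf{Y} - \frac{\eta}{1+\eta\alpha}\mathbf{K}\mathbf{K}^T\end{bmatrix}$ and $\|z\|_{\mathbf{Q}}^2=\langle\mathbf{Q}z,z\rangle$. *)

theory Defs
  imports "HOL-Analysis.Analysis"
begin

text \<open>Euclidean spaces X = R^d and Y = R^p are rendered as real^'d and real^'p;
  the p x d matrix K is real^'d^'p. The gradient of F is the function g.\<close>

definition has_gradient_everywhere :: "(real^'d \<Rightarrow> real) \<Rightarrow> (real^'d \<Rightarrow> real^'d) \<Rightarrow> bool" where
  "has_gradient_everywhere F g \<longleftrightarrow> (\<forall>x. (F has_derivative (\<lambda>h. g x \<bullet> h)) (at x))"

definition L_smooth :: "real \<Rightarrow> (real^'d \<Rightarrow> real) \<Rightarrow> (real^'d \<Rightarrow> real^'d) \<Rightarrow> bool" where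
  "L_smooth L F g \<longleftrightarrow> has_gradient_everywhere F g \<and> (\<forall>x y. norm (g x - g y) \<le> L * norm (x - y))"

definition strongly_convex :: "real \<Rightarrow> (real^'d \<Rightarrow> real) \<Rightarrow> bool" where
  "strongly_convex \<mu> F \<longleftrightarrow> convex_on UNIV (\<lambda>x. F x - (\<mu> / 2) * (norm x)\<^sup>2)"

definition bregman :: "(real^'d \<Rightarrow> real) \<Rightarrow> (real^'d \<Rightarrow> real^'d) \<Rightarrow> real^'d \<Rightarrow> real^'d \<Rightarrow> real" where
  "bregman F g x x' = F x - F x' - g x' \<bullet> (x - x')"

definition is_eigenvalue :: "real^'n^'n \<Rightarrow> real \<Rightarrow> bool" where
  "is_eigenvalue W c \<longleftrightarrow> (\<exists>v. v \<noteq> 0 \<and> W *v v = c *\<^sub>R v)"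

definition lambda_max :: "real^'n^'n \<Rightarrow> real" where
  "lambda_max W = Max {c. is_eigenvalue W c}"

definition lambda_min_pos :: "real^'n^'n \<Rightarrow> real" where
  "lambda_min_pos W = Min {c. is_eigenvalue W c \<and> c > 0}"

definition Qnorm2 :: "real^'d^'p \<Rightarrow> real \<Rightarrow> real \<Rightarrow> real \<Rightarrow> real^'d \<Rightarrow> real^'p \<Rightarrow> real" where
  "Qnorm2 K \<eta> \<theta> \<alpha> u v =
     (1/\<eta>) * (u \<bullet> u) + (1/\<theta>) * (v \<bullet> v) - (\<eta> / (1 + \<eta> * \<alpha>)) * (v \<bullet> ((K ** transpose K) *v v))"

fun alg :: "(real^'d \<Rightarrow> real^'d) \<Rightarrow> real^'d^'p \<Rightarrow> real^'p \<Rightarrow> real \<Rightarrow> real \<Rightarrow> real \<Rightarrow> real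
            \<Rightarrow> real^'d \<Rightarrow> nat \<Rightarrow> (real^'d) \<times> (real^'p) \<times> (real^'d)" where
  "alg g K b \<eta> \<theta> \<alpha> \<tau> x0 0 = (x0, 0, x0)"
| "alg g K b \<eta> \<theta> \<alpha> \<tau> x0 (Suc k) =
    (let (x, y, xf) = alg g K b \<eta> \<theta> \<alpha> \<tau> x0 k;
         xg = \<tau> *\<^sub>R x + (1 - \<tau>) *\<^sub>R xf;
         xh = (1 / (1 + \<eta> * \<alpha>)) *\<^sub>R (x - \<eta> *\<^sub>R (g xg - \<alpha> *\<^sub>R xg + transpose K *v y));
         y' = y + \<theta> *\<^sub>R (K *v xh - b);
         x' = (1 / (1 + \<eta> * \<alpha>)) *\<^sub>R (x - \<eta> *\<^sub>R (g xg - \<alpha> *\<^sub>R xg + transpose K *v y'));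
         xf' = xg + (2 * \<tau> / (2 - \<tau>)) *\<^sub>R (x' - x)
     in (x', y', xf'))"

end

theory Submission
  imports Defs
begin

lemma adj: fixes A :: "real^'n^'m" shows "(A *v x) \<bullet> y = x \<bullet> (transpose A *v y)"
  by (metis dot_lmul_matrix vector_transpose_matrix)

lemma eig_finite:
  fixes K :: "real^'d^'p"
  shows "finite {c. is_eigenvalue (transpose K ** K) c}"
proof -
  define W where "W = transpose K ** K"
  define E where "E = {c. is_eigenvalue W c}"
  have sym: "(W *v a) \<bullet> b = a \<bullet> (W *v b)" for a b
    unfolding W_def by (simp add: adj matrix_transpose_mul)
  define v where "v c = (SOME v. v \<noteq> 0 \<and> W *v v = c *\<^sub>R v)" for c
  have v: "v c \<noteq> 0 \<and> W *v v c = c *\<^sub>R v c" if cE: "c \<in> E" for c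
  proof -
    obtain w where "w \<noteq> 0 \<and> W *v w = c *\<^sub>R w" using cE unfolding E_def is_eigenvalue_def by auto
    then show ?thesis unfolding v_def by (rule someI)
  qed
  have orth: "v c1 \<bullet> v c2 = 0" if "c1 \<in> E" "c2 \<in> E" "c1 \<noteq> c2" for c1 c2
  proof -
    have "c1 * (v c1 \<bullet> v c2) = (W *v v c1) \<bullet> v c2" using v[OF that(1)] by simp
    also have "\<dots> = v c1 \<bullet> (W *v v c2)" by (rule sym)
    also have "\<dots> = c2 * (v c1 \<bullet> v c2)" using v[OF that(2)] by simp
    finally show ?thesis using that(3) by simp
  qed
  have inj: "inj_on v E"
  proof (rule inj_onI)
    fix a b assume "a \<in> E" "b \<in> E" "v a = v b"
    then show "a = b" using orth[of a b] v[of a] by (metis inner_eq_zero_iff)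
  qed
  have "independent (v ` E)"
    apply (rule pairwise_orthogonal_independent)
    using orth v by (auto simp: pairwise_def orthogonal_def)
  then have "finite (v ` E)" by (rule independent_imp_finite)
  then have "finite E" using inj finite_imageD by blast
  then show ?thesis unfolding E_def W_def .
qed


lemma quad_zero:
  fixes a b :: real
  assumes "0 \<le> a" "0 \<le> b" "\<And>t. 0 \<le> t^2*b - 2*t*a"
  shows "a = 0"
proof (rule ccontr)
  assume "a \<noteq> 0" then have a: "a > 0" using assms by simp
  define t where "t = a/(b+1)"
  have "0 \<le> t^2*b - 2*t*a" by (rule assms(3))
  have tp: "t > 0" unfolding t_def using a assms by simp
  have "t*b < a" unfolding t_def using a assms by (simp add: field_simps)
  then have "t*b - 2*a < 0" using a by simp
  then have "t * (t*b - 2*a) < 0" using tp by (simp add: mult_pos_neg)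
  moreover have "t^2*b - 2*t*a = t * (t*b - 2*a)" by (simp add: algebra_simps power2_eq_square)
  ultimately show False using \<open>0 \<le> t^2*b - 2*t*a\<close> by simp
qed

lemma Knz: fixes K :: "real^'d^'p" assumes "K \<noteq> 0" shows "\<exists>w. K *v w \<noteq> 0"
  using assms matrix_eq[of K 0] by auto

lemma upper_eig:
  fixes K :: "real^'d^'p"
  assumes "K \<noteq> 0"
  shows "\<exists>M>0. is_eigenvalue (transpose K ** K) M \<and>
           (\<forall>w. (norm (transpose K *v w))^2 \<le> M * (norm w)^2)"
proof -
  define Kt where "Kt = transpose K"
  define f where "f w = (norm (Kt *v w))^2" for w
  have cont: "continuous_on (sphere (0::real^'p) 1) f"
    unfolding f_def by (intro continuous_intros linear_continuous_on matrix_vector_mul_bounded_linear)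
  obtain w0 where w0: "w0 \<in> sphere 0 1" and mx: "\<And>y. y \<in> sphere 0 1 \<Longrightarrow> f y \<le> f w0"
    using continuous_attains_sup[OF compact_sphere _ cont] by force
  define M where "M = f w0"
  have n0: "norm w0 = 1" using w0 by simp
  have bound: "f w \<le> M * (norm w)^2" for w
  proof (cases "w = 0")
    case True then show ?thesis by (simp add: f_def)
  next
    case False
    have "f ((1/norm w) *\<^sub>R w) \<le> M" unfolding M_def by (rule mx) (use False in simp)
    moreover have "f ((1/norm w) *\<^sub>R w) = f w / (norm w)^2"
      unfolding f_def by (simp add: matrix_vector_mult_scaleR power_divide)
    ultimately show ?thesis using False by (simp add: divide_le_eq mult.commute)
  qed
  define z where "z = M *\<^sub>R w0 - K *v (Kt *v w0)"
  have key: "(Kt *v a) \<bullet> (Kt *v b) = a \<bullet> (K *v (Kt *v b))" for a b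
    unfolding Kt_def by (metis adj transpose_transpose)
  have "z \<bullet> z = 0"
  proof (rule quad_zero)
    show "0 \<le> z \<bullet> z" by simp
    show "0 \<le> M * (norm z)^2 - f z" using bound[of z] by simp
    fix t :: real
    have "0 \<le> M * (norm (w0 - t *\<^sub>R z))^2 - f (w0 - t *\<^sub>R z)" using bound[of "w0 - t *\<^sub>R z"] by simp
    also have "M * (norm (w0 - t *\<^sub>R z))^2 - f (w0 - t *\<^sub>R z)
       = (M * (w0 \<bullet> w0) - (Kt *v w0) \<bullet> (Kt *v w0)) - 2*t*(M * (z \<bullet> w0) - (Kt *v z) \<bullet> (Kt *v w0))
         + t^2 * (M * (norm z)^2 - f z)"
      unfolding f_def power2_norm_eq_inner
      by (simp add: matrix_vector_mult_diff_distrib matrix_vector_mult_scaleR inner_diff_left inner_diff_right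
           inner_commute algebra_simps power2_eq_square)
    also have "M * (w0 \<bullet> w0) - (Kt *v w0) \<bullet> (Kt *v w0) = 0"
      using n0 unfolding M_def f_def by (simp add: power2_norm_eq_inner[symmetric])
    also have "M * (z \<bullet> w0) - (Kt *v z) \<bullet> (Kt *v w0) = z \<bullet> z"
    proof -
      have "z \<bullet> z = z \<bullet> (M *\<^sub>R w0 - K *v (Kt *v w0))" using z_def by simp
      then show ?thesis unfolding key by (simp add: inner_diff_right inner_commute)
    qed
    finally show "0 \<le> t\<^sup>2 * (M * (norm z)\<^sup>2 - f z) - 2 * t * (z \<bullet> z)" by simp
  qed
  then have zz: "K *v (Kt *v w0) = M *\<^sub>R w0" unfolding z_def by simp
  have "Kt \<noteq> 0"
  proof
    assume "Kt = 0"
    then have "K = transpose 0" unfolding Kt_def by (metis transpose_transpose)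
    then show False using assms by (simp add: transpose_def vec_eq_iff)
  qed
  then obtain w where w: "Kt *v w \<noteq> 0" using Knz[of Kt] by auto
  have "0 < f w" using w by (simp add: f_def)
  also have "\<dots> \<le> M * (norm w)^2" by (rule bound)
  finally have Mpos: "M > 0" by (simp add: zero_less_mult_iff)
  have "Kt *v w0 \<noteq> 0" using Mpos unfolding M_def f_def by auto
  moreover have "(transpose K ** K) *v (Kt *v w0) = M *\<^sub>R (Kt *v w0)"
  proof -
    have "(transpose K ** K) *v (Kt *v w0) = Kt *v (K *v (Kt *v w0))"
      unfolding Kt_def by (rule matrix_vector_mul_assoc[symmetric])
    also have "\<dots> = M *\<^sub>R (Kt *v w0)" by (simp only: zz matrix_vector_mult_scaleR)
    finally show ?thesis .
  qed
  ultimately have "is_eigenvalue (transpose K ** K) M" unfolding is_eigenvalue_def by blast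
  with Mpos bound show ?thesis unfolding f_def Kt_def by blast
qed


lemma lower_eig:
  fixes K :: "real^'d^'p"
  assumes "K \<noteq> 0"
  shows "\<exists>m>0. is_eigenvalue (transpose K ** K) m \<and>
           (\<forall>w. m * (norm (K *v w))^2 \<le> (norm (transpose K *v (K *v w)))^2)"
proof -
  define Kt where "Kt = transpose K"
  define f where "f w = (norm (Kt *v w))^2" for w
  define R where "R = range (\<lambda>x. K *v x)"
  have sub: "subspace R" unfolding R_def
    using linear_subspace_image[OF matrix_vector_mul_linear subspace_UNIV] by simp
  have Rsc: "c *\<^sub>R v \<in> R" if "v \<in> R" for c v using sub that by (simp add: subspace_scale)
  have cl: "closed R" by (rule closed_subspace[OF sub])
  define S where "S = sphere (0::real^'p) 1 \<inter> R"
  have cS: "compact S" unfolding S_def using cl by (intro compact_Int_closed compact_sphere)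
  obtain w1 where w1: "K *v w1 \<noteq> 0" using Knz[OF assms] by auto
  have "(1/norm (K *v w1)) *\<^sub>R (K *v w1) \<in> R" unfolding R_def
    by (rule image_eqI[where x="(1/norm (K *v w1)) *\<^sub>R w1"]) (simp_all add: matrix_vector_mult_scaleR)
  then have "(1/norm (K *v w1)) *\<^sub>R (K *v w1) \<in> S" unfolding S_def using w1 by simp
  then have neS: "S \<noteq> {}" by auto
  have cont: "continuous_on S f"
    unfolding f_def by (intro continuous_intros linear_continuous_on matrix_vector_mul_bounded_linear)
  obtain u0 where u0: "u0 \<in> S" and mn: "\<And>y. y \<in> S \<Longrightarrow> f u0 \<le> f y"
    using continuous_attains_inf[OF cS neS cont] by force
  define m where "m = f u0"
  have n0: "norm u0 = 1" and u0R: "u0 \<in> R" using u0 unfolding S_def by auto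
  have bound: "m * (norm v)^2 \<le> f v" if "v \<in> R" for v
  proof (cases "v = 0")
    case True then show ?thesis by (simp add: f_def)
  next
    case False
    have "m \<le> f ((1/norm v) *\<^sub>R v)" unfolding m_def by (rule mn) (use False that Rsc in \<open>simp add: S_def\<close>)
    moreover have "f ((1/norm v) *\<^sub>R v) = f v / (norm v)^2"
      unfolding f_def by (simp add: matrix_vector_mult_scaleR power_divide)
    ultimately show ?thesis using False by (simp add: le_divide_eq mult.commute)
  qed
  define z where "z = K *v (Kt *v u0) - m *\<^sub>R u0"
  have zR: "z \<in> R"
  proof -
    obtain w0 where "u0 = K *v w0" using u0R unfolding R_def by auto
    then have "z = K *v (Kt *v u0 - m *\<^sub>R w0)" unfolding z_def
      by (simp add: matrix_vector_mult_diff_distrib matrix_vector_mult_scaleR)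
    then show ?thesis unfolding R_def by auto
  qed
  have Rdiff: "u0 - t *\<^sub>R z \<in> R" for t using sub u0R zR Rsc by (simp add: subspace_diff)
  have key: "(Kt *v a) \<bullet> (Kt *v b) = a \<bullet> (K *v (Kt *v b))" for a b
    unfolding Kt_def by (metis adj transpose_transpose)
  have "z \<bullet> z = 0"
  proof (rule quad_zero)
    show "0 \<le> z \<bullet> z" by simp
    show "0 \<le> f z - m * (norm z)^2" using bound[OF zR] by simp
    fix t :: real
    have "0 \<le> f (u0 - t *\<^sub>R z) - m * (norm (u0 - t *\<^sub>R z))^2" using bound[OF Rdiff[of t]] by simp
    also have "f (u0 - t *\<^sub>R z) - m * (norm (u0 - t *\<^sub>R z))^2
       = ((Kt *v u0) \<bullet> (Kt *v u0) - m * (u0 \<bullet> u0)) - 2*t*((Kt *v z) \<bullet> (Kt *v u0) - m * (z \<bullet> u0))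
         + t^2 * (f z - m * (norm z)^2)"
      unfolding f_def power2_norm_eq_inner
      by (simp add: matrix_vector_mult_diff_distrib matrix_vector_mult_scaleR inner_diff_left inner_diff_right
           inner_commute algebra_simps power2_eq_square)
    also have "(Kt *v u0) \<bullet> (Kt *v u0) - m * (u0 \<bullet> u0) = 0"
      using n0 unfolding m_def f_def by (simp add: power2_norm_eq_inner[symmetric])
    also have "(Kt *v z) \<bullet> (Kt *v u0) - m * (z \<bullet> u0) = z \<bullet> z"
    proof -
      have "z \<bullet> z = z \<bullet> (K *v (Kt *v u0) - m *\<^sub>R u0)" using z_def by simp
      then show ?thesis unfolding key by (simp add: inner_diff_right inner_commute)
    qed
    finally show "0 \<le> t\<^sup>2 * (f z - m * (norm z)\<^sup>2) - 2 * t * (z \<bullet> z)" by simp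
  qed
  then have zz: "K *v (Kt *v u0) = m *\<^sub>R u0" unfolding z_def by simp
  have "m \<noteq> 0"
  proof
    assume "m = 0"
    then have "Kt *v u0 = 0" unfolding m_def f_def by simp
    moreover obtain w0 where "u0 = K *v w0" using u0R unfolding R_def by auto
    ultimately have "u0 \<bullet> u0 = 0" using adj[of K w0 u0] Kt_def by simp
    then show False using n0 by simp
  qed
  then have mpos: "m > 0" unfolding m_def f_def by simp
  have "Kt *v u0 \<noteq> 0" using mpos unfolding m_def f_def by auto
  moreover have "(transpose K ** K) *v (Kt *v u0) = m *\<^sub>R (Kt *v u0)"
  proof -
    have "(transpose K ** K) *v (Kt *v u0) = Kt *v (K *v (Kt *v u0))"
      unfolding Kt_def by (rule matrix_vector_mul_assoc[symmetric])
    also have "\<dots> = m *\<^sub>R (Kt *v u0)" by (simp only: zz matrix_vector_mult_scaleR)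
    finally show ?thesis .
  qed
  ultimately have "is_eigenvalue (transpose K ** K) m" unfolding is_eigenvalue_def by blast
  moreover have "\<forall>w. m * (norm (K *v w))^2 \<le> (norm (transpose K *v (K *v w)))^2"
    using bound unfolding f_def Kt_def R_def by auto
  ultimately show ?thesis using mpos by blast
qed


lemma spec_bounds:
  fixes K :: "real^'d^'p"
  assumes "K \<noteq> 0" "lam1 \<ge> lambda_max (transpose K ** K)"
    "lam2 \<le> lambda_min_pos (transpose K ** K)"
  shows "\<And>w. (norm (transpose K *v w))^2 \<le> lam1 * (norm w)^2"
    and "\<And>w. lam2 * (norm (K *v w))^2 \<le> (norm (transpose K *v (K *v w)))^2"
    and "lam1 > 0"
proof -
  have fin: "finite {c. is_eigenvalue (transpose K ** K) c}" by (rule eig_finite)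
  obtain M where M: "M > 0" "is_eigenvalue (transpose K ** K) M"
    "\<And>w. (norm (transpose K *v w))^2 \<le> M * (norm w)^2"
    using upper_eig[OF assms(1)] by blast
  have "M \<le> lambda_max (transpose K ** K)" unfolding lambda_max_def
    using fin M(2) by (intro Max_ge) auto
  then have Mle: "M \<le> lam1" using assms(2) by simp
  show "lam1 > 0" using M Mle by simp
  show "(norm (transpose K *v w))^2 \<le> lam1 * (norm w)^2" for w
    using M(3)[of w] Mle by (meson mult_right_mono order_trans zero_le_power2)
  obtain m where m: "m > 0" "is_eigenvalue (transpose K ** K) m"
    "\<And>w. m * (norm (K *v w))^2 \<le> (norm (transpose K *v (K *v w)))^2"
    using lower_eig[OF assms(1)] by blast
  have "lambda_min_pos (transpose K ** K) \<le> m" unfolding lambda_min_pos_def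
    using fin m(1,2) by (intro Min_le) (auto intro: finite_subset[OF _ fin])
  then have "lam2 \<le> m" using assms(3) by simp
  then show "lam2 * (norm (K *v w))^2 \<le> (norm (transpose K *v (K *v w)))^2" for w
    using m(3)[of w] by (meson mult_right_mono order_trans zero_le_power2)
qed


lemma line_deriv:
  fixes F :: "real^'d \<Rightarrow> real"
  assumes "has_gradient_everywhere F g"
  shows "((\<lambda>t. F (y + t *\<^sub>R d)) has_real_derivative (g (y + t *\<^sub>R d) \<bullet> d)) (at t)"
proof -
  have l: "((\<lambda>t. y + t *\<^sub>R d) has_derivative (\<lambda>h. h *\<^sub>R d)) (at t)"
    by (auto intro!: derivative_eq_intros)
  have f: "(F has_derivative (\<lambda>h. g (y + t *\<^sub>R d) \<bullet> h)) (at (y + t *\<^sub>R d))"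
    using assms unfolding has_gradient_everywhere_def by blast
  have "((F \<circ> (\<lambda>t. y + t *\<^sub>R d)) has_derivative ((\<lambda>h. g (y + t *\<^sub>R d) \<bullet> h) \<circ> (\<lambda>h. h *\<^sub>R d))) (at t)"
    by (rule diff_chain_at[OF l f])
  moreover have "((\<lambda>h. g (y + t *\<^sub>R d) \<bullet> h) \<circ> (\<lambda>h. h *\<^sub>R d)) = (*) (g (y + t *\<^sub>R d) \<bullet> d)"
    by (auto simp: fun_eq_iff)
  ultimately show ?thesis unfolding has_field_derivative_def o_def by simp
qed

lemma sc_lower:
  fixes F :: "real^'d \<Rightarrow> real"
  assumes "has_gradient_everywhere F g" "strongly_convex \<mu> F"
  shows "bregman F g x y \<ge> \<mu>/2 * (norm (x - y))^2"
proof -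
  define d where "d = x - y"
  define \<phi> where "\<phi> z = F z - (\<mu> / 2) * (norm z)\<^sup>2" for z
  have cphi: "convex_on UNIV \<phi>" using assms(2) unfolding strongly_convex_def \<phi>_def by simp
  define \<psi> where "\<psi> t = \<phi> (y + t *\<^sub>R d)" for t
  have cpsi: "convex_on UNIV \<psi>"
  proof (rule convex_onI)
    fix s a b :: real assume "0 < s" "s < 1"
    have "y + ((1 - s) *\<^sub>R a + s *\<^sub>R b) *\<^sub>R d = (1 - s) *\<^sub>R (y + a *\<^sub>R d) + s *\<^sub>R (y + b *\<^sub>R d)"
      by (simp add: algebra_simps)
    then show "\<psi> ((1 - s) *\<^sub>R a + s *\<^sub>R b) \<le> (1 - s) * \<psi> a + s * \<psi> b"
      unfolding \<psi>_def using convex_onD[OF cphi, of s] \<open>0 < s\<close> \<open>s < 1\<close> by simp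
  qed simp
  have psi_eq: "\<psi> t = F (y + t *\<^sub>R d) - (\<mu>/2) * (y \<bullet> y + 2 * t * (y \<bullet> d) + t^2 * (d \<bullet> d))" for t
    unfolding \<psi>_def \<phi>_def power2_norm_eq_inner
    by (simp add: inner_add_left inner_add_right inner_commute algebra_simps power2_eq_square)
  have "(\<psi> has_real_derivative (g (y + 0 *\<^sub>R d) \<bullet> d - (\<mu>/2) * (2 * (y \<bullet> d) + 2 * 0 * (d \<bullet> d)))) (at 0)"
    unfolding psi_eq[abs_def]
    by (rule derivative_eq_intros line_deriv[OF assms(1)] | simp)+
  then have der: "(\<psi> has_real_derivative (g y \<bullet> d - \<mu> * (y \<bullet> d))) (at 0 within UNIV)" by simp
  have "\<psi> 1 - \<psi> 0 \<ge> (g y \<bullet> d - \<mu> * (y \<bullet> d)) * (1 - 0)"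
    by (rule convex_on_imp_above_tangent[OF cpsi _ _ _ der]) auto
  then show ?thesis unfolding psi_eq bregman_def d_def power2_norm_eq_inner
    by (simp add: inner_diff_left inner_diff_right inner_commute algebra_simps)
qed


lemma descent:
  fixes F :: "real^'d \<Rightarrow> real"
  assumes "L_smooth L F g"
  shows "bregman F g x y \<le> L/2 * (norm (x - y))^2"
proof -
  define d where "d = x - y"
  have hg: "has_gradient_everywhere F g" and lip: "\<And>a b. norm (g a - g b) \<le> L * norm (a - b)"
    using assms unfolding L_smooth_def by auto
  define q where "q t = L/2 * t^2 * (d \<bullet> d) + t * (g y \<bullet> d) - F (y + t *\<^sub>R d)" for t
  have "q 0 \<le> q 1"
  proof (rule DERIV_nonneg_imp_nondecreasing[of 0 1])
    fix t :: real assume t: "0 \<le> t" "t \<le> 1"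
    have "(q has_real_derivative (L/2 * (2 * t) * (d \<bullet> d) + g y \<bullet> d - g (y + t *\<^sub>R d) \<bullet> d)) (at t)"
      unfolding q_def[abs_def]
      by (rule derivative_eq_intros line_deriv[OF hg] | simp)+
    moreover have "(g (y + t *\<^sub>R d) - g y) \<bullet> d \<le> L * t * (d \<bullet> d)"
    proof -
      have "(g (y + t *\<^sub>R d) - g y) \<bullet> d \<le> norm (g (y + t *\<^sub>R d) - g y) * norm d"
        by (rule norm_cauchy_schwarz)
      also have "\<dots> \<le> (L * norm (t *\<^sub>R d)) * norm d"
        using lip[of "y + t *\<^sub>R d" y] by (simp add: mult_right_mono)
      also have "\<dots> = L * t * (d \<bullet> d)" using t by (simp add: power2_norm_eq_inner[symmetric] power2_eq_square)
      finally show ?thesis .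
    qed
    ultimately show "\<exists>y. DERIV q t :> y \<and> 0 \<le> y"
      by (intro exI[of _ "L/2 * (2 * t) * (d \<bullet> d) + g y \<bullet> d - g (y + t *\<^sub>R d) \<bullet> d"])
         (auto simp: inner_diff_left)
  qed simp
  then show ?thesis unfolding q_def bregman_def d_def power2_norm_eq_inner by simp
qed

lemma cocoercive:
  fixes F :: "real^'d \<Rightarrow> real"
  assumes "L_smooth L F g" "strongly_convex \<mu> F" "0 < \<mu>" "\<mu> \<le> L"
  shows "bregman F g x y \<ge> 1/(2*L) * (norm (g x - g y))^2"
proof -
  have hg: "has_gradient_everywhere F g" using assms unfolding L_smooth_def by auto
  have Lp: "L > 0" using assms by simp
  define z where "z = x - (1/L) *\<^sub>R (g x - g y)"
  have "0 \<le> \<mu>/2 * (norm (z - y))^2" using assms by simp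
  also have "\<dots> \<le> bregman F g z y" by (rule sc_lower[OF hg assms(2)])
  finally have z0: "0 \<le> bregman F g z y" .
  have idt: "bregman F g z y = bregman F g z x + bregman F g x y + (g x - g y) \<bullet> (z - x)"
    unfolding bregman_def by (simp add: inner_diff_left inner_diff_right algebra_simps)
  have "bregman F g z x \<le> L/2 * (norm (z - x))^2" by (rule descent[OF assms(1)])
  also have "\<dots> = 1/(2*L) * (norm (g x - g y))^2"
  proof -
    have "norm (z - x) = norm (g x - g y) / L" unfolding z_def using Lp by simp
    then show ?thesis using Lp by (simp add: power_divide power2_eq_square field_simps)
  qed
  finally have "bregman F g z x \<le> 1/(2*L) * (norm (g x - g y))^2" .
  moreover have "(g x - g y) \<bullet> (z - x) = - (1/L) * (norm (g x - g y))^2"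
    unfolding z_def by (simp add: power2_norm_eq_inner)
  ultimately have a: "L * (2 * bregman F g z x) \<le> (norm (g x - g y))^2"
     "L * ((g x - g y) \<bullet> (z - x)) = -((norm (g x - g y))^2)" using Lp by (simp_all add: field_simps)
  have "0 \<le> L * (bregman F g z x + bregman F g x y + (g x - g y) \<bullet> (z - x))"
    using z0 idt Lp by simp
  then have "(norm (g x - g y))^2 \<le> 2 * L * bregman F g x y" using a by (simp add: algebra_simps)
  then show ?thesis using Lp by (simp add: field_simps)
qed


lemma breg_identity:
  fixes F :: "real^'d \<Rightarrow> real"
  assumes t: "0 < \<tau>" "\<tau> \<le> 1"
    and xg: "xg = \<tau> *\<^sub>R x + (1 - \<tau>) *\<^sub>R xf"
    and xf': "xf' = xg + (2 * \<tau> / (2 - \<tau>)) *\<^sub>R (x' - x)"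
  shows "- 2 * ((g xg - g xs) \<bullet> (x' - xs)) =
     (2*(1-\<tau>)/\<tau>) * bregman F g xf xs - (2*(1-\<tau>)/\<tau> + 1) * bregman F g xf' xs - bregman F g xg xs
     - 2 * bregman F g xs xg - (2*(1-\<tau>)/\<tau>) * bregman F g xf xg + (2*(1-\<tau>)/\<tau> + 1) * bregman F g xf' xg"
proof -
  have "\<tau> *\<^sub>R x = xg - (1-\<tau>) *\<^sub>R xf" using xg by simp
  then have "x = (1/\<tau>) *\<^sub>R (xg - (1-\<tau>) *\<^sub>R xf)" using t by (metis divide_self_if less_irrefl scaleR_one scaleR_scaleR times_divide_eq_left mult_1)
  then have x: "x = (1/\<tau>) *\<^sub>R xg - ((1-\<tau>)/\<tau>) *\<^sub>R xf" by (simp add: scaleR_diff_right)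
  have "xf' - xg = (2 * \<tau> / (2 - \<tau>)) *\<^sub>R (x' - x)" using xf' by simp
  then have "((2-\<tau>)/(2*\<tau>)) *\<^sub>R (xf' - xg) = x' - x" using t by simp
  then have x': "x' = x + ((2-\<tau>)/(2*\<tau>)) *\<^sub>R (xf' - xg)" by simp
  have u: "x' - xs = (1/\<tau>) *\<^sub>R xg - ((1-\<tau>)/\<tau>) *\<^sub>R xf + ((2-\<tau>)/(2*\<tau>)) *\<^sub>R (xf' - xg) - xs"
    using x x' by simp
  show ?thesis unfolding u bregman_def
    using t by (simp add: inner_diff_right inner_add_right inner_diff_left field_simps) (simp add: algebra_simps)?
qed


lemma scalars:
  fixes \<mu> L lam1 lam2 \<tau> \<eta> \<rho> :: real
  assumes "0 < \<mu>" "\<mu> \<le> L" "0 < lam2" "lam2 \<le> lam1"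
    and tau: "\<tau> = min 1 ((1/2) * sqrt ((\<mu> / L) * (lam1 / lam2)))"
    and eta: "\<eta> = 1 / (4 * \<tau> * L)"
    and rho: "\<rho> = (1/4) * min (sqrt ((\<mu> / L) * (lam2 / lam1))) (lam2 / lam1)"
  shows "0 < \<tau>" "\<tau> \<le> 1" "0 \<le> \<rho>" "\<rho> \<le> lam2 / (4 * lam1)" "\<rho> * \<eta> * lam1 / lam2 \<le> 1 / (8 * L)"
    "\<rho> \<le> \<eta> * \<mu>" "\<rho> * (2 * (1 - \<tau>) / \<tau>) \<le> 1" "0 < \<eta>"
proof -
  define r where "r = \<mu> / L"
  define q where "q = lam2 / lam1"
  have L: "L > 0" using assms by simp
  have l1: "lam1 > 0" using assms by simp
  have r: "0 < r" "r \<le> 1" unfolding r_def using assms L by auto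
  have q: "0 < q" "q \<le> 1" unfolding q_def using assms l1 by auto
  define s1 where "s1 = sqrt ((\<mu> / L) * (lam1 / lam2))"
  define s2 where "s2 = sqrt ((\<mu> / L) * (lam2 / lam1))"
  have s1: "s1 = sqrt (r / q)" unfolding s1_def r_def q_def by simp
  have s2: "s2 = sqrt (r * q)" unfolding s2_def r_def q_def by simp
  have s1p: "s1 > 0" using r q s1 by simp
  have s2p: "s2 > 0" using r q s2 by simp
  have s12: "s1 * s2 = r"
  proof -
    have "s1 * s2 = sqrt (r / q * (r * q))" unfolding s1 s2 by (simp only: real_sqrt_mult)
    also have "r / q * (r * q) = r^2" using q by (simp add: power2_eq_square field_simps)
    finally show ?thesis using r by simp
  qed
  have s1q: "s1 * q = s2"
  proof -
    have "s1 * q = sqrt (r / q) * sqrt (q^2)" unfolding s1 using q by simp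
    also have "\<dots> = sqrt (r / q * q^2)" by (simp only: real_sqrt_mult)
    also have "r / q * q^2 = r * q" using q by (simp add: power2_eq_square field_simps)
    finally show ?thesis unfolding s2 .
  qed
  have tau': "\<tau> = min 1 (s1/2)" unfolding tau s1_def by simp
  have rho': "\<rho> = min s2 q / 4" unfolding rho s2_def q_def by simp
  show tp: "0 < \<tau>" using tau' s1p by simp
  show t1: "\<tau> \<le> 1" using tau' by simp
  show rp: "0 \<le> \<rho>" using rho' s2p q by simp
  show "\<rho> \<le> lam2 / (4 * lam1)" using rho' q_def by simp
  have R2: "\<rho> \<le> \<tau> * q / 2"
  proof (cases "1 \<le> s1/2")
    case True then have "\<tau> = 1" using tau' by simp
    then show ?thesis using rho' q by simp
  next
    case False then have "\<tau> = s1/2" using tau' by simp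
    then have "\<tau> * q / 2 = (s1 * q) / 4" by simp
    then have "\<tau> * q / 2 = s2 / 4" using s1q by simp
    then show ?thesis using rho' by simp
  qed
  show ep: "0 < \<eta>" using eta tp L by simp
  have "\<rho> * \<eta> * lam1 / lam2 = \<rho> / (4 * \<tau> * L * q)" unfolding eta q_def using l1 assms by (simp add: field_simps)
  also have "\<dots> \<le> (\<tau> * q / 2) / (4 * \<tau> * L * q)"
    using R2 tp L q by (intro divide_right_mono) auto
  also have "\<dots> = 1 / (8 * L)" using tp L q by (simp add: field_simps)
  finally show "\<rho> * \<eta> * lam1 / lam2 \<le> 1 / (8 * L)" .
  have "\<rho> * \<tau> \<le> (s2 / 4) * (s1 / 2)"
    using rho' tau' rp tp by (intro mult_mono) auto
  also have "\<dots> = r / 8" using s12 by (simp add: field_simps)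
  finally have rt: "\<rho> * \<tau> \<le> r / 8" .
  have "\<eta> * \<mu> = r / (4 * \<tau>)" unfolding eta r_def using tp L by (simp add: field_simps)
  then have "(\<eta> * \<mu> / 2) * \<tau> = r / 8" using tp by simp
  then have "\<rho> * \<tau> \<le> (\<eta> * \<mu> / 2) * \<tau>" using rt by linarith
  then have "\<rho> \<le> \<eta> * \<mu> / 2" using tp by (simp add: mult_le_cancel_right)
  moreover have "0 < \<eta> * \<mu>" using ep assms by simp
  ultimately show "\<rho> \<le> \<eta> * \<mu>" by simp
  have "\<tau> * q \<le> \<tau>" using q tp by (simp add: mult_left_le)
  then have r2: "\<rho> \<le> \<tau> / 2" using R2 by simp
  have "\<rho> * (2 * (1 - \<tau>) / \<tau>) \<le> (\<tau> / 2) * (2 * (1 - \<tau>) / \<tau>)"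
    using r2 tp t1 by (intro mult_right_mono) auto
  also have "\<dots> = 1 - \<tau>" using tp by simp
  finally show "\<rho> * (2 * (1 - \<tau>) / \<tau>) \<le> 1" using tp by linarith
qed


lemma young3:
  fixes a b c :: "'a::real_inner"
  shows "(norm (a + b + c))^2 \<le> 2 * (norm a)^2 + 4 * (norm b)^2 + 4 * (norm c)^2"
proof -
  have "norm (a + b + c) \<le> norm a + norm b + norm c" by (meson norm_triangle_le order_refl add_mono)
  then have "(norm (a + b + c))^2 \<le> (norm a + norm b + norm c)^2" by (simp add: power_mono)
  also have "\<dots> \<le> 2 * (norm a)^2 + 4 * (norm b)^2 + 4 * (norm c)^2"
  proof -
    have "0 \<le> (norm a - norm b - norm c)^2 + 2 * (norm b - norm c)^2" by simp
    then show ?thesis by (simp add: power2_eq_square algebra_simps)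
  qed
  finally show ?thesis .
qed

lemma step:
  fixes F :: "real^'d \<Rightarrow> real" and g :: "real^'d \<Rightarrow> real^'d"
    and K :: "real^'d^'p" and b :: "real^'p"
    and L \<mu> lam1 lam2 :: real and xs x xf :: "real^'d" and ys y :: "real^'p" and w :: "real^'d"
    and \<eta> \<theta> \<alpha> \<tau> :: real
  assumes mu: "0 < \<mu>" "\<mu> \<le> L"
    and sm: "L_smooth L F g" and sc: "strongly_convex \<mu> F"
    and Kne: "K \<noteq> 0"
    and Kxs: "K *v xs = b" and opt: "g xs + transpose K *v ys = 0"
    and l1: "lam1 \<ge> lambda_max (transpose K ** K)"
    and l2: "0 < lam2" "lam2 \<le> lambda_min_pos (transpose K ** K)"
    and tau: "\<tau> = min 1 ((1/2) * sqrt ((\<mu> / L) * (lam1 / lam2)))"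
    and eta: "\<eta> = 1 / (4 * \<tau> * L)" and theta: "\<theta> = 1 / (\<eta> * lam1)" and alpha: "\<alpha> = \<mu>"
    and yw: "y - ys = K *v w"
  defines "xg \<equiv> \<tau> *\<^sub>R x + (1 - \<tau>) *\<^sub>R xf"
  defines "xh \<equiv> (1 / (1 + \<eta> * \<alpha>)) *\<^sub>R (x - \<eta> *\<^sub>R (g xg - \<alpha> *\<^sub>R xg + transpose K *v y))"
  defines "y' \<equiv> y + \<theta> *\<^sub>R (K *v xh - b)"
  defines "x' \<equiv> (1 / (1 + \<eta> * \<alpha>)) *\<^sub>R (x - \<eta> *\<^sub>R (g xg - \<alpha> *\<^sub>R xg + transpose K *v y'))"
  defines "xf' \<equiv> xg + (2 * \<tau> / (2 - \<tau>)) *\<^sub>R (x' - x)"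
  shows "Qnorm2 K \<eta> \<theta> \<alpha> (x' - xs) (y' - ys) + (2 * (1 - \<tau>) / \<tau>) * bregman F g xf' xs
     \<le> inverse (1 + (1/4) * min (sqrt ((\<mu> / L) * (lam2 / lam1))) (lam2 / lam1)) *
        (Qnorm2 K \<eta> \<theta> \<alpha> (x - xs) (y - ys) + (2 * (1 - \<tau>) / \<tau>) * bregman F g xf xs)"
proof -
  define \<rho> where "\<rho> = (1/4) * min (sqrt ((\<mu> / L) * (lam2 / lam1))) (lam2 / lam1)"
  define Kt where "Kt = transpose K"
  define a where "a = 1 + \<eta> * \<alpha>"
  define c where "c = \<eta> / a"
  define C where "C = 2 * (1 - \<tau>) / \<tau>"
  define Qn where "Qn v = (1/\<theta>) * (norm v)^2 - c * (norm (Kt *v v))^2" for v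
  have hg: "has_gradient_everywhere F g" using sm unfolding L_smooth_def by auto
  have Lp: "L > 0" using mu by simp
  have SB1: "\<And>v. (norm (Kt *v v))^2 \<le> lam1 * (norm v)^2"
    and SB2: "\<And>v. lam2 * (norm (K *v v))^2 \<le> (norm (Kt *v (K *v v)))^2"
    and l1p: "lam1 > 0"
    using spec_bounds[OF Kne l1 l2(2)] unfolding Kt_def by auto
  have l21: "lam2 \<le> lam1"
  proof -
    obtain w1 where w1: "K *v w1 \<noteq> 0" using Knz[OF Kne] by auto
    have "lam2 * (norm (K *v w1))^2 \<le> lam1 * (norm (K *v w1))^2"
      using SB2[of w1] SB1[of "K *v w1"] by linarith
    then show ?thesis using w1 by simp
  qed
  note scal = scalars[OF mu l2(1) l21 tau eta \<rho>_def]
  have tp: "0 < \<tau>" and t1: "\<tau> \<le> 1" and rp: "0 \<le> \<rho>" and R1: "\<rho> \<le> lam2 / (4 * lam1)"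
    and R2: "\<rho> * \<eta> * lam1 / lam2 \<le> 1 / (8 * L)" and R3: "\<rho> \<le> \<eta> * \<mu>"
    and R4: "\<rho> * C \<le> 1" and ep: "0 < \<eta>"
    using scal unfolding C_def by auto
  have "0 \<le> \<eta> * \<alpha>" using ep mu alpha by simp
  then have ap: "a > 0" and a1: "a \<ge> 1" unfolding a_def by auto
  have cp: "0 \<le> c" "c \<le> \<eta>" unfolding c_def using ap a1 ep by (auto simp: divide_le_eq)
  have thp: "\<theta> > 0" unfolding theta using ep l1p by simp
  have ith: "1/\<theta> = \<eta> * lam1" unfolding theta by simp
  have Cp: "C \<ge> 0" unfolding C_def using tp t1 by simp
  have QQ: "Qnorm2 K \<eta> \<theta> \<alpha> u v = (1/\<eta>) * (norm u)^2 + Qn v" for u v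
  proof -
    have "(K ** transpose K) *v v = K *v (Kt *v v)" unfolding Kt_def by (rule matrix_vector_mul_assoc[symmetric])
    moreover have "v \<bullet> (K *v (Kt *v v)) = (norm (Kt *v v))^2"
      using adj[of K "Kt *v v" v] unfolding Kt_def by (simp add: inner_commute power2_norm_eq_inner)
    ultimately show ?thesis unfolding Qnorm2_def Qn_def c_def a_def by (simp add: power2_norm_eq_inner)
  qed
  have Qn_nonneg: "Qn v \<ge> 0" for v
  proof -
    have "c * (norm (Kt *v v))^2 \<le> \<eta> * (lam1 * (norm v)^2)"
      using cp SB1[of v] by (intro mult_mono) auto
    then show ?thesis unfolding Qn_def ith by simp
  qed
  have Qn_le: "Qn v \<le> \<eta> * lam1 * (norm v)^2" for v
    unfolding Qn_def ith using cp by simp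
  define u' where "u' = x' - xs"
  define v' where "v' = y' - ys"
  define dx where "dx = x' - x"
  define dy where "dy = y' - y"
  define gd where "gd = g xg - g xs"
  have E1: "a *\<^sub>R x' = x - \<eta> *\<^sub>R (g xg - \<alpha> *\<^sub>R xg + Kt *v y')"
    unfolding x'_def a_def[symmetric] Kt_def using ap by simp
  have gxs: "g xs = - (Kt *v ys)" using opt unfolding Kt_def by (simp add: eq_neg_iff_add_eq_0)
  have E5: "dx = - \<eta> *\<^sub>R (gd + \<alpha> *\<^sub>R (x' - xg) + Kt *v v')"
  proof -
    have "x' + (\<eta> * \<alpha>) *\<^sub>R x' = x - \<eta> *\<^sub>R (g xg - \<alpha> *\<^sub>R xg + Kt *v y')"
      using E1 unfolding a_def by (simp add: scaleR_add_left)
    moreover have "Kt *v y' = Kt *v v' + Kt *v ys" unfolding v'_def by (simp add: matrix_vector_mult_diff_distrib)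
    ultimately show ?thesis unfolding dx_def gd_def gxs
      by (simp add: algebra_simps)
  qed
  have E2: "x' = xh - c *\<^sub>R (Kt *v dy)"
  proof -
    have "x' - xh = (1/a) *\<^sub>R (- \<eta> *\<^sub>R (Kt *v y' - Kt *v y))"
      unfolding x'_def xh_def a_def[symmetric] Kt_def by (simp add: algebra_simps)
    also have "\<dots> = - c *\<^sub>R (Kt *v dy)" unfolding dy_def c_def
      by (simp add: matrix_vector_mult_diff_distrib)
    finally show ?thesis by (simp add: algebra_simps)
  qed
  have E3: "dy = \<theta> *\<^sub>R (K *v (xh - xs))"
    unfolding dy_def y'_def Kxs[symmetric] by (simp add: matrix_vector_mult_diff_distrib)
  have E4: "(1/\<theta>) *\<^sub>R dy - c *\<^sub>R (K *v (Kt *v dy)) = K *v u'"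
  proof -
    have "(1/\<theta>) *\<^sub>R dy = K *v (xh - xs)" using E3 thp by simp
    moreover have "K *v u' = K *v (xh - xs) - c *\<^sub>R (K *v (Kt *v dy))"
      unfolding u'_def E2 by (simp add: matrix_vector_mult_diff_distrib matrix_vector_mult_scaleR)
    ultimately show ?thesis by simp
  qed
  have vR: "v' = K *v (w + \<theta> *\<^sub>R (xh - xs))"
  proof -
    have "v' = (y - ys) + dy" unfolding v'_def dy_def by simp
    then show ?thesis unfolding yw E3 by (simp add: matrix_vector_right_distrib matrix_vector_mult_scaleR)
  qed
  have N1: "(1/\<eta>) * (norm u')^2 - (1/\<eta>) * (norm (x - xs))^2 = (2/\<eta>) * (dx \<bullet> u') - (1/\<eta>) * (norm dx)^2"
  proof -
    have e: "x - xs = u' - dx" unfolding u'_def dx_def by simp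
    show ?thesis unfolding e power2_norm_eq_inner
      by (simp add: inner_diff_left inner_diff_right inner_commute algebra_simps)
  qed
  have N2: "Qn v' - Qn (y - ys) = 2 * (u' \<bullet> (Kt *v v')) - Qn dy"
  proof -
    have yv: "y - ys = v' - dy" unfolding v'_def dy_def by simp
    have ad: "(Kt *v dy) \<bullet> (Kt *v v') = (K *v (Kt *v dy)) \<bullet> v'"
      using adj[of K "Kt *v dy" v'] unfolding Kt_def by simp
    have "(1/\<theta>) * (dy \<bullet> v') - c * ((Kt *v dy) \<bullet> (Kt *v v')) = ((1/\<theta>) *\<^sub>R dy - c *\<^sub>R (K *v (Kt *v dy))) \<bullet> v'"
      unfolding ad by (simp add: inner_diff_left)
    also have "\<dots> = u' \<bullet> (Kt *v v')" unfolding E4 using adj[of K u' v'] unfolding Kt_def by simp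
    finally have key: "(1/\<theta>) * (dy \<bullet> v') - c * ((Kt *v dy) \<bullet> (Kt *v v')) = u' \<bullet> (Kt *v v')" .
    have "Qn (v' - dy) = Qn v' - 2 * ((1/\<theta>) * (dy \<bullet> v') - c * ((Kt *v dy) \<bullet> (Kt *v v'))) + Qn dy"
      unfolding Qn_def power2_norm_eq_inner
      by (simp add: matrix_vector_mult_diff_distrib inner_diff_left inner_diff_right inner_commute algebra_simps)
    then show ?thesis unfolding yv key by simp
  qed
  have N3: "(2/\<eta>) * (dx \<bullet> u') = -2 * (gd \<bullet> u') - 2 * \<alpha> * ((x' - xg) \<bullet> u') - 2 * ((Kt *v v') \<bullet> u')"
    unfolding E5 using ep by (simp add: inner_add_left algebra_simps)
  have BI: "- 2 * (gd \<bullet> u') = C * bregman F g xf xs - (C + 1) * bregman F g xf' xs - bregman F g xg xs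
     - 2 * bregman F g xs xg - C * bregman F g xf xg + (C + 1) * bregman F g xf' xg"
    unfolding gd_def u'_def C_def by (rule breg_identity[OF tp t1 xg_def[THEN meta_eq_to_obj_eq] xf'_def[THEN meta_eq_to_obj_eq]])
  define P where "P = (1/\<eta>) * (norm (x - xs))^2 + Qn (y - ys) + C * bregman F g xf xs"
  define P' where "P' = (1/\<eta>) * (norm u')^2 + Qn v' + C * bregman F g xf' xs"
  define nd where "nd = (norm dx)^2"
  define nu where "nu = (norm u')^2"
  define nxg where "nxg = (norm (x' - xg))^2"
  define ngx where "ngx = (norm (xg - xs))^2"
  define ngd where "ngd = (norm gd)^2"
  define nv where "nv = (norm v')^2"
  define nKv where "nKv = (norm (Kt *v v'))^2"
  have energy: "P' = P - (1/\<eta>) * nd - Qn dy - bregman F g xf' xs - bregman F g xg xs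
     - 2 * bregman F g xs xg - C * bregman F g xf xg + (C + 1) * bregman F g xf' xg - 2 * \<mu> * ((x' - xg) \<bullet> u')"
    using N1 N2 N3 BI unfolding P_def P'_def nd_def alpha by (simp add: inner_commute algebra_simps)
  have I2: "2 * ((x' - xg) \<bullet> u') = nxg + nu - ngx"
  proof -
    have "xg - xs = (x' - xs) - (x' - xg)" by simp
    then have "ngx = (norm (u' - (x' - xg)))^2" unfolding ngx_def u'_def by simp
    then show ?thesis unfolding nxg_def nu_def power2_norm_eq_inner
      by (simp add: inner_diff_left inner_diff_right inner_commute algebra_simps)
  qed
  have I3: "(C + 1) * bregman F g xf' xg \<le> (1/2) * ((1/\<eta>) * nd)"
  proof -
    have "bregman F g xf' xg \<le> L/2 * (norm (xf' - xg))^2" by (rule descent[OF sm])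
    also have "(norm (xf' - xg))^2 = (2 * \<tau> / (2 - \<tau>))^2 * nd"
      unfolding xf'_def nd_def dx_def using tp t1 by (simp add: power_mult_distrib power_divide)
    finally have "bregman F g xf' xg \<le> L/2 * ((2 * \<tau> / (2 - \<tau>))^2 * nd)" .
    then have "(C + 1) * bregman F g xf' xg \<le> (C + 1) * (L/2 * ((2 * \<tau> / (2 - \<tau>))^2 * nd))"
      using Cp by (simp add: mult_left_mono)
    also have "(C + 1) * (L/2 * ((2 * \<tau> / (2 - \<tau>))^2 * nd)) = (2 * L * \<tau> / (2 - \<tau>)) * nd"
    proof -
      have t2: "2 - \<tau> \<noteq> 0" using t1 by simp
      have "C + 1 = (2 - \<tau>) / \<tau>" unfolding C_def using tp by (simp add: field_simps)
      then show ?thesis using tp t2 by (simp add: power2_eq_square)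
    qed
    also have "\<dots> \<le> (2 * L * \<tau>) * nd"
    proof (rule mult_right_mono)
      show "0 \<le> nd" unfolding nd_def by simp
      have "0 \<le> 2 * L * \<tau>" using Lp tp by simp
      then show "2 * L * \<tau> / (2 - \<tau>) \<le> 2 * L * \<tau>" using t1 by (simp add: divide_le_eq mult_le_cancel_left1)
    qed
    also have "\<dots> = (1/2) * ((1/\<eta>) * nd)" unfolding eta by simp
    finally show ?thesis .
  qed
  have I4: "\<mu> * ngx \<le> bregman F g xg xs + bregman F g xs xg"
    using sc_lower[OF hg sc, of xg xs] sc_lower[OF hg sc, of xs xg] unfolding ngx_def
    by (simp add: norm_minus_commute)
  have I5: "ngd / (2 * L) \<le> bregman F g xs xg"
    using cocoercive[OF sm sc mu, of xs xg] unfolding ngd_def gd_def by (simp add: norm_minus_commute)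
  have D0: "0 \<le> bregman F g p q" for p q
    using sc_lower[OF hg sc, of p q] mu by (smt (verit) mult_nonneg_nonneg zero_le_power2 divide_nonneg_pos)
  have Qd0: "0 \<le> Qn dy" by (rule Qn_nonneg)
  have CD: "0 \<le> C * bregman F g xf xg" using Cp D0 by simp
  have H1: "(1/2) * ((1/\<eta>) * nd) + bregman F g xf' xs + ngd / (2 * L) + \<mu> * nxg + \<mu> * nu \<le> P - P'"
  proof -
    have "2 * \<mu> * ((x' - xg) \<bullet> u') = \<mu> * nxg + \<mu> * nu - \<mu> * ngx"
      using I2 by (simp add: algebra_simps) (metis I2 mult.assoc right_diff_distrib distrib_left)
    then show ?thesis using energy I3 I4 I5 Qd0 CD by linarith
  qed
  have I6: "nKv \<le> 2 * (nd / \<eta>^2) + 4 * ngd + 4 * (\<mu>^2 * nxg)"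
  proof -
    have "Kt *v v' = (- (1/\<eta>) *\<^sub>R dx) + (- gd) + (- \<mu> *\<^sub>R (x' - xg))"
      unfolding E5 alpha using ep by (simp add: algebra_simps)
    then have "nKv = (norm ((- (1/\<eta>) *\<^sub>R dx) + (- gd) + (- \<mu> *\<^sub>R (x' - xg))))^2" unfolding nKv_def by simp
    also have "\<dots> \<le> 2 * (norm (- (1/\<eta>) *\<^sub>R dx))^2 + 4 * (norm (- gd))^2 + 4 * (norm (- \<mu> *\<^sub>R (x' - xg)))^2"
      by (rule young3)
    also have "\<dots> = 2 * (nd / \<eta>^2) + 4 * ngd + 4 * (\<mu>^2 * nxg)"
      unfolding nd_def ngd_def nxg_def using ep mu by (simp add: power_mult_distrib power_divide)
    finally show ?thesis .
  qed
  have I7: "lam2 * nv \<le> nKv" using SB2[of "w + \<theta> *\<^sub>R (xh - xs)"] unfolding nv_def nKv_def vR[symmetric] .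
  define \<beta> where "\<beta> = \<rho> * \<eta> * lam1 / lam2"
  have bp: "0 \<le> \<beta>" unfolding \<beta>_def using rp ep l1p l2 by simp
  have b1: "\<beta> \<le> \<eta> / 4"
  proof -
    have "\<beta> \<le> (lam2 / (4 * lam1)) * \<eta> * lam1 / lam2" unfolding \<beta>_def
      using R1 ep l1p l2 by (intro divide_right_mono mult_right_mono) auto
    also have "\<dots> = \<eta> / 4" using l1p l2 by simp
    finally show ?thesis .
  qed
  have b2: "\<beta> \<le> 1 / (8 * L)" using R2 unfolding \<beta>_def .
  have nKv0: "0 \<le> nKv" unfolding nKv_def by simp
  have nd0: "0 \<le> nd" unfolding nd_def by simp
  have ngd0: "0 \<le> ngd" unfolding ngd_def by simp
  have nxg0: "0 \<le> nxg" unfolding nxg_def by simp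
  have nu0: "0 \<le> nu" unfolding nu_def by simp
  have Q1: "\<rho> * Qn v' \<le> \<beta> * nKv"
  proof -
    have "\<rho> * Qn v' \<le> \<rho> * (\<eta> * lam1 * nv)" using Qn_le[of v'] rp unfolding nv_def by (simp add: mult_left_mono)
    also have "\<dots> = \<beta> * (lam2 * nv)" unfolding \<beta>_def using l2 by simp
    also have "\<dots> \<le> \<beta> * nKv" using I7 bp by (simp add: mult_left_mono)
    finally show ?thesis .
  qed
  have Q2: "\<beta> * nKv \<le> (1/2) * ((1/\<eta>) * nd) + ngd / (2 * L) + \<mu> * nxg"
  proof -
    have "\<beta> * nKv \<le> \<beta> * (2 * (nd / \<eta>^2) + 4 * ngd + 4 * (\<mu>^2 * nxg))"
      using I6 bp by (simp add: mult_left_mono)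
    also have "\<dots> = \<beta> * (2 * (nd / \<eta>^2)) + \<beta> * (4 * ngd) + \<beta> * (4 * (\<mu>^2 * nxg))"
      by (simp add: algebra_simps)
    also have "\<beta> * (2 * (nd / \<eta>^2)) \<le> (\<eta> / 4) * (2 * (nd / \<eta>^2))"
      using b1 nd0 by (intro mult_right_mono) auto
    also have "(\<eta> / 4) * (2 * (nd / \<eta>^2)) = (1/2) * ((1/\<eta>) * nd)" using ep by (simp add: power2_eq_square)
    also have "\<beta> * (4 * ngd) \<le> (1 / (8 * L)) * (4 * ngd)"
      using b2 ngd0 by (intro mult_right_mono) auto
    also have "(1 / (8 * L)) * (4 * ngd) = ngd / (2 * L)" by simp
    also have "\<beta> * (4 * (\<mu>^2 * nxg)) \<le> (1 / (8 * L)) * (4 * (\<mu>^2 * nxg))"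
      using b2 nxg0 by (intro mult_right_mono) auto
    also have "(1 / (8 * L)) * (4 * (\<mu>^2 * nxg)) = (\<mu> / (2 * L)) * (\<mu> * nxg)"
      by (simp add: power2_eq_square)
    also have "\<dots> \<le> 1 * (\<mu> * nxg)"
      using mu Lp nxg0 by (intro mult_right_mono) auto
    finally show ?thesis by simp
  qed
  have Q3: "\<rho> * ((1/\<eta>) * nu) \<le> \<mu> * nu"
  proof -
    have "\<rho> * (1/\<eta>) \<le> \<mu>" using R3 ep by (simp add: divide_le_eq mult.commute)
    then show ?thesis using nu0 by (metis mult.assoc mult_right_mono)
  qed
  have Q4: "\<rho> * (C * bregman F g xf' xs) \<le> bregman F g xf' xs"
    using R4 D0[of xf' xs] by (metis mult.assoc mult_left_le_one_le rp Cp mult_nonneg_nonneg)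
  have H2: "\<rho> * P' \<le> (1/2) * ((1/\<eta>) * nd) + bregman F g xf' xs + ngd / (2 * L) + \<mu> * nxg + \<mu> * nu"
  proof -
    have "\<rho> * P' = \<rho> * ((1/\<eta>) * nu) + \<rho> * Qn v' + \<rho> * (C * bregman F g xf' xs)"
      unfolding P'_def nu_def by (simp add: algebra_simps)
    then show ?thesis using Q1 Q2 Q3 Q4 by linarith
  qed
  have fin: "(1 + \<rho>) * P' \<le> P" using H1 H2 by (simp add: algebra_simps)
  have "P' = inverse (1 + \<rho>) * ((1 + \<rho>) * P')" using rp by simp
  also have "\<dots> \<le> inverse (1 + \<rho>) * P" using fin rp by (intro mult_left_mono) auto
  finally have "P' \<le> inverse (1 + \<rho>) * P" .
  moreover have "P' = Qnorm2 K \<eta> \<theta> \<alpha> (x' - xs) (y' - ys) + (2 * (1 - \<tau>) / \<tau>) * bregman F g xf' xs"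
    unfolding P'_def QQ u'_def v'_def C_def ..
  moreover have "P = Qnorm2 K \<eta> \<theta> \<alpha> (x - xs) (y - ys) + (2 * (1 - \<tau>) / \<tau>) * bregman F g xf xs"
    unfolding P_def QQ C_def ..
  ultimately show ?thesis unfolding \<rho>_def by simp
qed


theorem lemma5:
  fixes F :: "real^'d \<Rightarrow> real" and g :: "real^'d \<Rightarrow> real^'d"
    and K :: "real^'d^'p" and b :: "real^'p"
    and L \<mu> lam1 lam2 :: real and x0 xs :: "real^'d" and ys :: "real^'p"
    and \<eta> \<theta> \<alpha> \<tau> :: real and k :: nat
  assumes "0 < \<mu>" "\<mu> \<le> L"
    and "L_smooth L F g" and "strongly_convex \<mu> F"
    and "K \<noteq> 0" and "b \<in> range (\<lambda>x. K *v x)"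
    and "K *v xs = b" and "\<forall>x. K *v x = b \<longrightarrow> F xs \<le> F x"
    and "ys \<in> range (\<lambda>x. K *v x)" and "g xs + transpose K *v ys = 0"
    and "lam1 \<ge> lambda_max (transpose K ** K)"
    and "0 < lam2" and "lam2 \<le> lambda_min_pos (transpose K ** K)"
    and "\<tau> = min 1 ((1/2) * sqrt ((\<mu> / L) * (lam1 / lam2)))"
    and "\<eta> = 1 / (4 * \<tau> * L)" and "\<theta> = 1 / (\<eta> * lam1)" and "\<alpha> = \<mu>"
  shows
    "(let \<Psi> = (\<lambda>j. case alg g K b \<eta> \<theta> \<alpha> \<tau> x0 j of (x, y, xf) \<Rightarrow>
                  Qnorm2 K \<eta> \<theta> \<alpha> (x - xs) (y - ys) + (2 * (1 - \<tau>) / \<tau>) * bregman F g xf xs)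
     in \<Psi> (Suc k) \<le> inverse (1 + (1/4) * min (sqrt ((\<mu> / L) * (lam2 / lam1))) (lam2 / lam1)) * \<Psi> k)"
proof -
  obtain ws where ws: "ys = K *v ws" using assms(9) by auto
  have inv: "\<exists>w. fst (snd (alg g K b \<eta> \<theta> \<alpha> \<tau> x0 j)) - ys = K *v w" for j
  proof (induction j)
    case 0
    show ?case by (rule exI[of _ "0 - ws"]) (simp only: ws matrix_vector_mult_diff_distrib matrix_vector_mult_0_right alg.simps fst_conv snd_conv diff_zero)
  next
    case (Suc j)
    obtain x y xf where A: "alg g K b \<eta> \<theta> \<alpha> \<tau> x0 j = (x, y, xf)" by (metis prod.exhaust)
    obtain w where w: "y - ys = K *v w" using Suc A by auto
    define xg where "xg = \<tau> *\<^sub>R x + (1 - \<tau>) *\<^sub>R xf"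
    define xh where "xh = (1 / (1 + \<eta> * \<alpha>)) *\<^sub>R (x - \<eta> *\<^sub>R (g xg - \<alpha> *\<^sub>R xg + transpose K *v y))"
    have "fst (snd (alg g K b \<eta> \<theta> \<alpha> \<tau> x0 (Suc j))) = y + \<theta> *\<^sub>R (K *v xh - b)"
      by (simp add: A Let_def xg_def xh_def)
    also have "\<dots> - ys = K *v (w + \<theta> *\<^sub>R (xh - xs))"
      using w assms(7) by (simp add: algebra_simps matrix_vector_right_distrib matrix_vector_mult_diff_distrib matrix_vector_mult_scaleR)
    finally show ?case by blast
  qed
  obtain x y xf where A: "alg g K b \<eta> \<theta> \<alpha> \<tau> x0 k = (x, y, xf)" by (metis prod.exhaust)
  obtain w where w: "y - ys = K *v w" using inv[of k] A by auto
  show ?thesis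
    using step[OF assms(1,2,3,4,5,7,10,11,12,13,14,15,16,17) w]
    by (simp add: A Let_def)
qed

end
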